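(* For any two disjoint sets of vertices $V_1,V_2$, the complete oddly bipartite $4$-graph $G^{\mathrm{odd}}(V_1,V_2)$ is $\mathscr C_k^{(4)}$-hom-free for each $k\in\{1,2,3\}$. In particular, $\mathrm{ex}(n,C_L^{(4)})\ge e^{\mathrm{opt}}(n)$ for every $n$ and every $L>4$ with $L\not\equiv0\pmod4$.
   Context: $G^{\mathrm{odd}}(V_1,V_2)$ is the $4$-graph on $V_1\cup V_2$ whose edges are the $4$-subsets meeting $V_1$ in an odd number of vertices. For $\ell>4$, the tight cycle $C_\ell^{(4)}$ has vertices $v_1,\dots,v_\ell$ and edges $\{v_i,\dots,v_{i+3}\}$ (indices mod $\ell$). A homomorphism $F\to G$ maps $V(F)\to V(G)$ sending each edge of $F$ onto an edge of $G$; $G$ is $\mathscr C_k^{(4)}$-hom-free if there is no homomorphism $C_\ell^{(4)}\to G$ for any $\ell>4$ with $\ell\equiv k\pmod 4$. $\mathrm{ex}(n,F)$ is the maximum number of edges of an $n$-vertex $4$-graph with no subgraph isomorphic to $F$. $e^{\mathrm{opt}}(n)=\max_{a+b=n}\big(\binom a3b+a\binom b3\big)$. *)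

theory Defs
  imports Main
begin

text \<open>A 4-graph is represented by its edge set, a set of 4-element vertex sets.\<close>

definition G_odd :: "'a set \<Rightarrow> 'a set \<Rightarrow> 'a set set" where
  "G_odd V1 V2 = {e. e \<subseteq> V1 \<union> V2 \<and> card e = 4 \<and> odd (card (e \<inter> V1))}"

definition tight_cycle_edges :: "nat \<Rightarrow> nat set set" where
  "tight_cycle_edges l =
     {{i mod l, (i + 1) mod l, (i + 2) mod l, (i + 3) mod l} | i. i < l}"

definition is_hom_cycle :: "nat \<Rightarrow> (nat \<Rightarrow> 'a) \<Rightarrow> 'a set set \<Rightarrow> bool" where
  "is_hom_cycle l f G \<longleftrightarrow> (\<forall>E \<in> tight_cycle_edges l. f ` E \<in> G)"

definition cycle_hom_free :: "nat \<Rightarrow> 'a set set \<Rightarrow> bool" where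
  "cycle_hom_free k G \<longleftrightarrow>
     \<not> (\<exists>l f. l > 4 \<and> l mod 4 = k mod 4 \<and> is_hom_cycle l f G)"

definition contains_tight_cycle :: "nat \<Rightarrow> 'a set \<Rightarrow> 'a set set \<Rightarrow> bool" where
  "contains_tight_cycle L V H \<longleftrightarrow>
     (\<exists>f. inj_on f {0..<L} \<and> f ` {0..<L} \<subseteq> V \<and> (\<forall>E \<in> tight_cycle_edges L. f ` E \<in> H))"

definition is_4graph_on :: "'a set \<Rightarrow> 'a set set \<Rightarrow> bool" where
  "is_4graph_on V H \<longleftrightarrow> (\<forall>e \<in> H. e \<subseteq> V \<and> card e = 4)"

definition ex_tight_cycle :: "nat \<Rightarrow> nat \<Rightarrow> nat" where
  "ex_tight_cycle n L =
     Max {card H | H. is_4graph_on {0..<n} H \<and> \<not> contains_tight_cycle L {0..<n} H}"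

definition e_opt :: "nat \<Rightarrow> nat" where
  "e_opt n = Max {(a choose 3) * b + a * (b choose 3) | a b. a + b = n}"

end

theory Submission imports Defs begin
lemma dist4: "card {a,b,c,d} = 4 \<Longrightarrow> a\<noteq>b \<and> a\<noteq>c \<and> a\<noteq>d \<and> b\<noteq>c \<and> b\<noteq>d \<and> c\<noteq>d"
  by (auto simp: card_insert_if split: if_splits)
lemma key1: assumes "card {a,b,c,d} = 4" "card {b,c,d,e} = 4"
  "odd (card ({a,b,c,d} \<inter> V))" "odd (card ({b,c,d,e} \<inter> V))"
shows "(a \<in> V) = (e \<in> V)"
  using assms dist4[OF assms(1)] dist4[OF assms(2)]
  by (cases "a \<in> V"; cases "b \<in> V"; cases "c \<in> V"; cases "d \<in> V"; cases "e \<in> V"; simp add: card_insert_if)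
lemma key2: assumes "card {a,b,c,d} = 4" "(a \<in> V) = (c \<in> V)" "(b \<in> V) = (d \<in> V)"
  shows "even (card ({a,b,c,d} \<inter> V))"
  using assms dist4[OF assms(1)]
  by (cases "a \<in> V"; cases "b \<in> V"; cases "c \<in> V"; cases "d \<in> V"; simp add: card_insert_if)
lemma hom_free:
  assumes l: "l > 4" "l mod 4 \<noteq> 0" and h: "is_hom_cycle l f (G_odd V1 V2)"
  shows False
proof -
  define P where "P i = (f (i mod l) \<in> V1)" for i
  have edge: "card {f (i mod l), f ((i+1) mod l), f ((i+2) mod l), f ((i+3) mod l)} = 4 \<and>
     odd (card ({f (i mod l), f ((i+1) mod l), f ((i+2) mod l), f ((i+3) mod l)} \<inter> V1))" for i
  proof -
    have "{i mod l mod l, (i mod l + 1) mod l, (i mod l + 2) mod l, (i mod l + 3) mod l} \<in> tight_cycle_edges l"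
      unfolding tight_cycle_edges_def using l
      by (intro CollectI exI[of _ "i mod l"]) simp
    moreover have "{i mod l mod l, (i mod l + 1) mod l, (i mod l + 2) mod l, (i mod l + 3) mod l}
       = {i mod l, (i+1) mod l, (i+2) mod l, (i+3) mod l}"
      by (simp only: mod_add_left_eq mod_mod_trivial)
    ultimately have "f ` {i mod l, (i+1) mod l, (i+2) mod l, (i+3) mod l} \<in> G_odd V1 V2"
      using h unfolding is_hom_cycle_def by metis
    then show ?thesis unfolding G_odd_def by simp
  qed
  have step: "P (i+4) = P i" for i
  proof -
    have e2: "card {f ((i+1) mod l), f ((i+2) mod l), f ((i+3) mod l), f ((i+4) mod l)} = 4 \<and>
     odd (card ({f ((i+1) mod l), f ((i+2) mod l), f ((i+3) mod l), f ((i+4) mod l)} \<inter> V1))"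
    proof -
      have q: "i+1+1 = i+2" "i+1+2 = i+3" "i+1+3 = i+4" by simp_all
      show ?thesis using edge[of "i+1"] unfolding q .
    qed
    show ?thesis using key1[of "f (i mod l)" _ _ _ "f ((i+4) mod l)" V1] edge[of i] e2
      unfolding P_def by (metis (no_types))
  qed
  have per4: "P (i + 4*q) = P i" for i q
  proof (induction q)
    case (Suc q)
    have "i + 4 * Suc q = (i + 4*q) + 4" by simp
    then show ?case using Suc step[of "i+4*q"] by (simp only:)
  qed simp
  have perl: "P (i + l) = P i" for i unfolding P_def by simp
  define r where "r = l mod 4"
  have lr: "l = r + 4 * (l div 4)" unfolding r_def by simp
  have perr: "P (i + r) = P i" for i
    using perl[of i] per4[of "i+r" "l div 4"] lr by (metis add.assoc)
  have r123: "r = 1 \<or> r = 2 \<or> r = 3" using l(2) unfolding r_def by auto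
  have per2: "P (i+2) = P i" for i
    using r123
  proof (elim disjE)
    assume "r = 1" then show ?thesis using perr[of i] perr[of "i+1"] by (simp add: add.assoc)
  next
    assume "r = 2" then show ?thesis using perr[of i] by simp
  next
    assume "r = 3" then have "P (i+1) = P i" using perr[of "i+1"] step[of i] by (simp add: add.assoc add.commute)
    moreover have "P (i+2) = P (i+1)" using \<open>r = 3\<close> perr[of "i+2"] step[of "i+1"] by (simp add: add.assoc add.commute)
    ultimately show ?thesis by simp
  qed
  have a: "P 2 = P 0" using per2[of 0] by (simp only: add_0)
  have q3: "1+2 = (3::nat)" by simp
  have b: "P 3 = P 1" using per2[of 1] unfolding q3 .
  have q: "0+1 = (1::nat)" "0+2 = (2::nat)" "0+3=(3::nat)" by simp_all
  have e: "card {f (0 mod l), f (1 mod l), f (2 mod l), f (3 mod l)} = 4 \<and>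
     odd (card ({f (0 mod l), f (1 mod l), f (2 mod l), f (3 mod l)} \<inter> V1))"
    using edge[of 0] unfolding q .
  show False using key2[of "f (0 mod l)" "f (1 mod l)" "f (2 mod l)" "f (3 mod l)" V1] e a b
    unfolding P_def by blast
qed
lemma prod_part:
  assumes f1: "finite V1" and f2: "finite V2" and d: "V1 \<inter> V2 = {}"
  shows "card ((\<lambda>(A,B). A \<union> B) ` ({A. A \<subseteq> V1 \<and> card A = a} \<times> {B. B \<subseteq> V2 \<and> card B = b}))
     = (card V1 choose a) * (card V2 choose b)"
    and "(\<lambda>(A,B). A \<union> B) ` ({A. A \<subseteq> V1 \<and> card A = a} \<times> {B. B \<subseteq> V2 \<and> card B = b})
     \<subseteq> {e. e \<subseteq> V1 \<union> V2 \<and> card e = a + b \<and> card (e \<inter> V1) = a}"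
proof -
  let ?S = "{A. A \<subseteq> V1 \<and> card A = a}" and ?T = "{B. B \<subseteq> V2 \<and> card B = b}"
  have inj: "inj_on (\<lambda>(A,B). A \<union> B) (?S \<times> ?T)"
  proof (rule inj_onI, clarify)
    fix A B A' B' assume "A \<subseteq> V1" "B \<subseteq> V2" "A' \<subseteq> V1" "B' \<subseteq> V2" "A \<union> B = A' \<union> B'"
    then have "A = (A \<union> B) \<inter> V1" "A' = (A' \<union> B') \<inter> V1" "B = (A \<union> B) \<inter> V2" "B' = (A' \<union> B') \<inter> V2"
      using d by blast+
    then show "A = A' \<and> B = B'" using \<open>A \<union> B = A' \<union> B'\<close> by metis
  qed
  show "card ((\<lambda>(A,B). A \<union> B) ` (?S \<times> ?T)) = (card V1 choose a) * (card V2 choose b)"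
    using card_image[OF inj] card_cartesian_product n_subsets[OF f1] n_subsets[OF f2] by metis
  show "(\<lambda>(A,B). A \<union> B) ` (?S \<times> ?T) \<subseteq> {e. e \<subseteq> V1 \<union> V2 \<and> card e = a + b \<and> card (e \<inter> V1) = a}"
  proof clarify
    fix A B assume h: "A \<subseteq> V1" "B \<subseteq> V2"
    have "A \<inter> B = {}" using h d by blast
    moreover have "finite A" "finite B" using h f1 f2 finite_subset by auto
    moreover have "(A \<union> B) \<inter> V1 = A" using h d by blast
    ultimately show "A \<union> B \<subseteq> V1 \<union> V2 \<and> card (A \<union> B) = card A + card B \<and> card ((A \<union> B) \<inter> V1) = card A"
      using h card_Un_disjoint by auto
  qed
qed

lemma card_Godd_ge:
  assumes f1: "finite V1" and f2: "finite V2" and d: "V1 \<inter> V2 = {}"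
  shows "(card V1 choose 3) * card V2 + card V1 * (card V2 choose 3) \<le> card (G_odd V1 V2)"
proof -
  let ?U = "(\<lambda>(A,B). A \<union> B) ` ({A. A \<subseteq> V1 \<and> card A = 3} \<times> {B. B \<subseteq> V2 \<and> card B = 1})"
  let ?W = "(\<lambda>(A,B). A \<union> B) ` ({A. A \<subseteq> V1 \<and> card A = 1} \<times> {B. B \<subseteq> V2 \<and> card B = 3})"
  note U = prod_part[OF f1 f2 d, of 3 1] and W = prod_part[OF f1 f2 d, of 1 3]
  have fin: "finite (G_odd V1 V2)"
    by (rule finite_subset[of _ "Pow (V1 \<union> V2)"]) (auto simp: G_odd_def f1 f2)
  have s1: "{e. e \<subseteq> V1 \<union> V2 \<and> card e = 3 + 1 \<and> card (e \<inter> V1) = 3} \<subseteq> G_odd V1 V2"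
    unfolding G_odd_def by (rule subsetI) simp
  have s2: "{e. e \<subseteq> V1 \<union> V2 \<and> card e = 1 + 3 \<and> card (e \<inter> V1) = 1} \<subseteq> G_odd V1 V2"
    unfolding G_odd_def by (rule subsetI) simp
  have sub: "?U \<union> ?W \<subseteq> G_odd V1 V2" by (rule Un_least[OF order_trans[OF U(2) s1] order_trans[OF W(2) s2]])
  have dis: "?U \<inter> ?W = {}"
  proof (rule equals0I)
    fix x assume "x \<in> ?U \<inter> ?W"
    then have x1: "x \<in> ?U" and x2: "x \<in> ?W" by auto
    have "card (x \<inter> V1) = 3" using subsetD[OF U(2) x1] by simp
    moreover have "card (x \<inter> V1) = 1" using subsetD[OF W(2) x2] by simp
    ultimately show False by simp
  qed
  have fU: "finite ?U" "finite ?W" using finite_subset[OF sub fin] by auto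
  have "card (?U \<union> ?W) = card ?U + card ?W" using card_Un_disjoint[OF fU dis] .
  also have "\<dots> = (card V1 choose 3) * card V2 + card V1 * (card V2 choose 3)"
    using U(1) W(1) by simp
  finally show ?thesis using card_mono[OF fin sub] by simp
qed
theorem proposition3p15:
  fixes V1 V2 :: "'a set"
  assumes "V1 \<inter> V2 = {}"
  shows "(\<forall>k \<in> {1, 2, 3}. cycle_hom_free k (G_odd V1 V2))
    \<and> (\<forall>n L. L > 4 \<and> L mod 4 \<noteq> 0 \<longrightarrow> e_opt n \<le> ex_tight_cycle n L)"
proof (intro conjI ballI allI impI)
  fix k :: nat assume "k \<in> {1,2,3}"
  then have "k mod 4 \<noteq> 0" by auto
  then show "cycle_hom_free k (G_odd V1 V2)"
    unfolding cycle_hom_free_def using hom_free by metis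
next
  fix n L :: nat assume L: "L > 4 \<and> L mod 4 \<noteq> 0"
  have each: "(a choose 3) * b + a * (b choose 3) \<le> ex_tight_cycle n L" if ab: "a + b = n" for a b
  proof -
    let ?G = "G_odd {0..<a} {a..<n}"
    have c: "(a choose 3) * b + a * (b choose 3) \<le> card ?G"
    proof -
      have "n - a = b" using ab by simp
      then show ?thesis using card_Godd_ge[of "{0..<a}" "{a..<n}"] by simp
    qed
    have U: "{0..<a} \<union> {a..<n} = {0..<n}" using ab by auto
    have g4: "is_4graph_on {0..<n} ?G" unfolding is_4graph_on_def G_odd_def U by auto
    have nc: "\<not> contains_tight_cycle L {0..<n} ?G"
    proof
      assume "contains_tight_cycle L {0..<n} ?G"
      then obtain f where "\<forall>E \<in> tight_cycle_edges L. f ` E \<in> ?G"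
        unfolding contains_tight_cycle_def by blast
      then have "is_hom_cycle L f ?G" unfolding is_hom_cycle_def by blast
      then show False using hom_free L by blast
    qed
    let ?S = "{card H | H. is_4graph_on {0..<n} H \<and> \<not> contains_tight_cycle L {0..<n} H}"
    have "?S \<subseteq> {..card (Pow {0..<(n::nat)})}"
    proof
      fix x assume "x \<in> ?S"
      then obtain H where H: "x = card H" "is_4graph_on {0..<n} H" by blast
      then have "H \<subseteq> Pow {0..<n}" unfolding is_4graph_on_def by auto
      then show "x \<in> {..card (Pow {0..<(n::nat)})}" using H(1) card_mono[of "Pow {0..<n}" H] by simp
    qed
    then have "finite ?S" using finite_subset by blast
    moreover have "card ?G \<in> ?S" using g4 nc by blast
    ultimately have "card ?G \<le> Max ?S" by (rule Max_ge)
    then show ?thesis using c unfolding ex_tight_cycle_def by linarith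
  qed
  let ?T = "{(a choose 3) * b + a * (b choose 3) | a b. a + b = n}"
  have T: "?T = (\<lambda>a. (a choose 3) * (n-a) + a * ((n-a) choose 3)) ` {..n}"
  proof (rule set_eqI, rule iffI)
    fix x assume "x \<in> ?T"
    then obtain a b where "x = (a choose 3) * b + a * (b choose 3)" "a + b = n" by blast
    then show "x \<in> (\<lambda>a. (a choose 3) * (n-a) + a * ((n-a) choose 3)) ` {..n}"
      by (intro image_eqI[of _ _ a]) auto
  next
    fix x assume "x \<in> (\<lambda>a. (a choose 3) * (n-a) + a * ((n-a) choose 3)) ` {..n}"
    then obtain a where "a \<le> n" "x = (a choose 3) * (n-a) + a * ((n-a) choose 3)" by blast
    then show "x \<in> ?T" by (intro CollectI exI[of _ a] exI[of _ "n-a"]) simp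
  qed
  have "Max ?T \<le> ex_tight_cycle n L"
    unfolding T by (rule Max.boundedI) (auto intro: each)
  then show "e_opt n \<le> ex_tight_cycle n L" unfolding e_opt_def .
qed

end
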